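(* Let $\mathcal{E}$ be an ellipse in a real affine plane. Consider two Euclidean structures (positive definite quadratic forms on the plane's vector space) on this plane; each makes the plane Euclidean and thus defines a pair of foci of $\mathcal{E}$ and a major axis of $\mathcal{E}$. Let $\ell$ be a chord of $\mathcal{E}$ passing through two foci, one of each pair. Then the two major axes (each measured with its own Euclidean structure) have equal length if and only if the two Euclidean structures induce equal units of length on the chord $\ell$ (i.e. assign the same length to $\ell$). *)

theory Defs
  imports "HOL-Analysis.Analysis"
begin

text \<open>The real affine plane is modelled as real^2 (points and translation vectors).
A Euclidean structure is a positive definite quadratic form x \<mapsto> x \<bullet> (A *v x)
given by a symmetric matrix A.\<close>

definition euclidean_structure :: "real^2^2 \<Rightarrow> bool" where
  "euclidean_structure A \<longleftrightarrow> transpose A = A \<and> (\<forall>x. x \<noteq> 0 \<longrightarrow> x \<bullet> (A *v x) > 0)"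

text \<open>Length of a vector with respect to the Euclidean structure A.\<close>
definition qnorm :: "real^2^2 \<Rightarrow> real^2 \<Rightarrow> real" where
  "qnorm A x = sqrt (x \<bullet> (A *v x))"

text \<open>An ellipse (an affine notion): image of the unit circle under an invertible affine map.\<close>
definition is_ellipse :: "(real^2) set \<Rightarrow> bool" where
  "is_ellipse E \<longleftrightarrow> (\<exists>M c. invertible (M :: real^2^2) \<and> E = {c + M *v u | u. norm u = 1})"

text \<open>F1, F2 are the foci of E in the Euclidean structure A: E is the locus of points
whose distances to F1 and F2 have constant sum.\<close>
definition foci :: "real^2^2 \<Rightarrow> (real^2) set \<Rightarrow> real^2 \<Rightarrow> real^2 \<Rightarrow> bool" where
  "foci A E F1 F2 \<longleftrightarrow> (\<exists>a. E = {P. qnorm A (P - F1) + qnorm A (P - F2) = a})"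

text \<open>Length of the major axis of E in the Euclidean structure A: the longest chord.\<close>
definition major_axis_length :: "real^2^2 \<Rightarrow> (real^2) set \<Rightarrow> real" where
  "major_axis_length A E = (SUP P\<in>E. SUP Q\<in>E. qnorm A (P - Q))"

end

theory Submission
  imports Defs
begin


lemma sqrt_form:
  assumes "euclidean_structure A"
  shows "\<exists>R :: real^2^2. invertible R \<and> (\<forall>x. qnorm A x = norm (R *v x))"
proof -
  define p where "p = A$1$1"
  define r where "r = A$1$2"
  define t where "t = A$2$2"
  have sym: "A$2$1 = A$1$2"
  proof -
    have "transpose A = A" using assms unfolding euclidean_structure_def by blast
    hence "(transpose A)$1$2 = A$1$2" by simp
    thus ?thesis unfolding transpose_def by simp
  qed
  have form: "\<And>x::real^2. x \<bullet> (A *v x) = p * (x$1)^2 + 2*r*(x$1)*(x$2) + t*(x$2)^2"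
    by (simp add: inner_vec_def matrix_vector_mult_def sum_2 p_def r_def t_def sym power2_eq_square algebra_simps)
  have pd: "\<And>x::real^2. x \<noteq> 0 \<Longrightarrow> x \<bullet> (A *v x) > 0" using assms unfolding euclidean_structure_def by blast
  have p0: "p > 0"
    using pd[of "vector [1,0]"] form[of "vector [1,0]"]
    by (simp add: vec_eq_iff forall_2)
  define \<delta> where "\<delta> = p*t - r^2"
  have "vector [-r, p] \<noteq> (0::real^2)" using p0 by (simp add: vec_eq_iff forall_2)
  hence "p * r^2 - 2*r*r*p + t*p^2 > 0"
    using pd[of "vector [-r,p]"] form[of "vector [-r,p]"] by (simp add: power2_eq_square)
  hence "p * \<delta> > 0" unfolding \<delta>_def by (simp add: power2_eq_square algebra_simps)
  hence d0: "\<delta> > 0" using p0 by (simp add: zero_less_mult_iff)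
  define R :: "real^2^2" where "R = vector [vector [sqrt p, r / sqrt p], vector [0, sqrt (\<delta>/p)]]"
  have "det R = sqrt p * sqrt (\<delta>/p)" by (simp add: R_def det_2)
  hence "det R \<noteq> 0" using p0 d0 by simp
  hence inv: "invertible R" by (simp add: invertible_det_nz)
  have sp: "sqrt p ^2 = p" using p0 by simp
  have sd: "sqrt (\<delta>/p) ^2 = \<delta>/p" using p0 d0 by simp
  have "qnorm A x = norm (R *v x)" for x
  proof -
    have "(R *v x) \<bullet> (R *v x) = (sqrt p * x$1 + r / sqrt p * x$2)^2 + (sqrt (\<delta>/p) * x$2)^2"
      by (simp add: R_def inner_vec_def matrix_vector_mult_def sum_2 power2_eq_square)
    also have "\<dots> = p * (x$1)^2 + 2*r*(x$1)*(x$2) + t*(x$2)^2"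
    proof -
      have ss: "sqrt p * sqrt p = p" using p0 by simp
      have e1: "(sqrt p * x$1)^2 = p * (x$1)^2" using p0 by (simp add: power_mult_distrib)
      have e2: "(r / sqrt p * x$2)^2 = r^2/p * (x$2)^2" using p0 by (simp add: power_mult_distrib power_divide)
      have e3: "2 * (sqrt p * x$1) * (r / sqrt p * x$2) = 2*r*(x$1)*(x$2)" using p0 by (simp add: field_simps)
      have 1: "(sqrt p * x$1 + r / sqrt p * x$2)^2 = p * (x$1)^2 + 2*r*(x$1)*(x$2) + r^2/p * (x$2)^2"
        unfolding power2_sum e1 e2 e3 by simp
      have 2: "(sqrt (\<delta>/p) * x$2)^2 = (\<delta>/p) * (x$2)^2" using sd by (simp add: power_mult_distrib)
      have 3: "r^2/p * (x$2)^2 + (\<delta>/p) * (x$2)^2 = t*(x$2)^2" using p0 unfolding \<delta>_def by (simp add: field_simps)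
      show ?thesis using 1 2 3 by simp
    qed
    finally show ?thesis unfolding qnorm_def norm_eq_sqrt_inner form by simp
  qed
  thus ?thesis using inv by blast
qed



lemma nd2: "norm (x - y)^2 = norm x^2 - 2*(x \<bullet> y) + norm (y::'a::real_inner)^2"
  by (simp add: power2_norm_eq_inner inner_diff_left inner_diff_right inner_commute)

lemma fin_alg:
  fixes a l z nu be W :: real
  assumes a: "a > 0" and l: "l > 0" and s0: "0 \<le> z" and s1: "z \<le> 1"
    and hP: "2*a*z*nu = l + 2*z*be" and hQ: "2*a*(1-z)*nu = l - 2*(1-z)*be"
    and hW: "4*a^2*nu^2 - 4*be^2 = a^2*l*W"
  shows "a * W = 4 * nu"
proof -
  define X where "X = 2*a*nu - 2*be"
  define Y where "Y = 2*a*nu + 2*be"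
  have sX: "z*X = l" using hP unfolding X_def by (simp add: algebra_simps)
  have "(1-z)*Y = 2*a*(1-z)*nu + 2*(1-z)*be" unfolding Y_def by (simp add: algebra_simps)
  hence sY: "(1-z)*Y = l" using hQ by linarith
  have sn0: "z \<noteq> 0" using sX l by auto
  have sn1: "1 - z \<noteq> 0" using sY l by auto
  have "(z*(1-z))*(X*Y) = (z*X)*((1-z)*Y)" by (simp add: algebra_simps)
  also have "\<dots> = l * l" using sX sY by simp
  also have "\<dots> = l * ((1-z)*l + z*l)" by (simp add: algebra_simps)
  also have "\<dots> = l * ((1-z)*(z*X) + z*((1-z)*Y))" using sX sY by simp
  also have "\<dots> = (z*(1-z)) * (l*(X+Y))" by (simp add: algebra_simps)
  finally have "X*Y = l*(X+Y)" using sn0 sn1 by simp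
  moreover have "X*Y = 4*a^2*nu^2 - 4*be^2" unfolding X_def Y_def by (simp add: power2_eq_square algebra_simps)
  moreover have "X + Y = 4*a*nu" unfolding X_def Y_def by simp
  ultimately have "a^2*l*W = l*(4*a*nu)" using hW by simp
  hence "a * (a*W) = a * (4*nu)" using l by (simp add: power2_eq_square algebra_simps)
  thus ?thesis using a by simp
qed

lemma phi_alg: "4*a^2*(n + 2*j + e) = (L + 2*h)^2 \<Longrightarrow> 4*a^2*n - 4*h^2 + (8*a^2*j - 4*L*h) + (4*a^2*e - L^2) = (0::real)"
  by (simp add: power2_eq_square algebra_simps)

lemma core:
  fixes M :: "real^2^2" and c F1 F2 P Q w1 w2 :: "real^2" and a :: real
  assumes inv: "invertible M"
    and E1: "\<And>w. norm w = 1 \<Longrightarrow> norm (c + M *v w - F1) + norm (c + M *v w - F2) = a"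
    and E2: "\<And>X. norm (X - F1) + norm (X - F2) = a \<Longrightarrow> \<exists>w. norm w = 1 \<and> X = c + M *v w"
    and w1: "norm w1 = 1" and w2: "norm w2 = 1"
    and P: "P = c + M *v w1" and Q: "Q = c + M *v w2"
    and PQ: "P \<noteq> Q" and F1seg: "F1 \<in> closed_segment P Q"
  shows "a * (norm (w1 - w2))^2 = 4 * norm (P - Q)"
proof -
  obtain N where NM: "N ** M = mat 1" and MN: "M ** N = mat 1" using inv unfolding invertible_def by blast
  have Ml: "N *v (M *v x) = x" for x using NM by (simp add: matrix_vector_mul_assoc)
  have Mr: "M *v (N *v y) = y" for y using MN by (simp add: matrix_vector_mul_assoc)
  define g where "g = F2 - F1"
  define d where "d = norm g"
  have PE: "norm (P - F1) + norm (P - F2) = a" using E1[OF w1] P by simp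
  have QE: "norm (Q - F1) + norm (Q - F2) = a" using E1[OF w2] Q by simp
  have key: "2*a*norm(X - F1) = a^2 - d^2 + 2*((X-F1) \<bullet> g)"
    if h: "norm (X - F1) + norm (X - F2) = a" for X
  proof -
    have eqX: "X - F2 = (X - F1) - g" by (simp add: g_def)
    have "norm (X - F2)^2 = norm (X-F1)^2 - 2*((X-F1) \<bullet> g) + d^2"
      unfolding eqX d_def by (rule nd2)
    moreover have "norm (X-F2) = a - norm (X-F1)" using h by simp
    ultimately have "(a - norm (X-F1))^2 = norm (X-F1)^2 - 2*((X-F1) \<bullet> g) + d^2" by simp
    thus ?thesis unfolding power2_diff by linarith
  qed
  have ad: "d \<le> a"
  proof -
    have "g = (P - F1) - (P - F2)" by (simp add: g_def)
    hence "d \<le> norm (P - F1) + norm (P - F2)" unfolding d_def by (metis norm_triangle_ineq4)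
    thus ?thesis using PE by simp
  qed
  have wne: "w1 \<noteq> w2" using PQ P Q by auto
  have a0: "a > 0"
  proof (rule ccontr)
    assume "\<not> a > 0"
    hence "norm (P - F1) = 0" "norm (Q - F1) = 0" using PE QE
      norm_ge_zero[of "P-F1"] norm_ge_zero[of "P-F2"] norm_ge_zero[of "Q-F1"] norm_ge_zero[of "Q-F2"]
      by linarith+
    thus False using PQ by simp
  qed
  have adne: "a \<noteq> d"
  proof
    assume ad_eq: "a = d"
    have seg: "X \<in> closed_segment F1 F2" if "norm (X - F1) + norm (X - F2) = a" for X
    proof -
      have "dist F1 F2 = dist F1 X + dist X F2"
        using that ad_eq by (simp add: dist_norm d_def g_def norm_minus_commute)
      thus ?thesis using between[of F1 F2 X] between_mem_segment by blast
    qed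
    define m where "m = (1/2) *\<^sub>R P + (1/2) *\<^sub>R Q"
    have "m \<in> closed_segment F1 F2"
      using convexD[OF convex_closed_segment seg[OF PE] seg[OF QE], of "1/2" "1/2"] by (simp add: m_def)
    hence "dist F1 F2 = dist F1 m + dist m F2" using between[of F1 F2 m] between_mem_segment by blast
    hence "norm (m - F1) + norm (m - F2) = a"
      using ad_eq by (simp add: dist_norm d_def g_def norm_minus_commute)
    then obtain w where w: "norm w = 1" "m = c + M *v w" using E2 by blast
    have "m = c + M *v ((1/2) *\<^sub>R w1 + (1/2) *\<^sub>R w2)"
    proof -
      have "M *v ((1/2) *\<^sub>R w1 + (1/2) *\<^sub>R w2) = (1/2) *\<^sub>R (M *v w1) + (1/2) *\<^sub>R (M *v w2)"
        by (simp add: matrix_vector_right_distrib matrix_vector_mult_scaleR)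
      moreover have "m = (1/2) *\<^sub>R c + (1/2) *\<^sub>R c + ((1/2) *\<^sub>R (M *v w1) + (1/2) *\<^sub>R (M *v w2))"
        using P Q unfolding m_def by (simp add: scaleR_add_right)
      ultimately show ?thesis by (simp add: scaleR_add_left[symmetric])
    qed
    hence "M *v w = M *v ((1/2) *\<^sub>R w1 + (1/2) *\<^sub>R w2)" using w by simp
    hence "w = (1/2) *\<^sub>R w1 + (1/2) *\<^sub>R w2" by (metis Ml)
    hence n2: "norm (w1 + w2) = 2" using w by (simp add: scaleR_add_right[symmetric])
    have par: "norm (w1+w2)^2 + norm(w1-w2)^2 = 2*norm w1^2 + 2*norm w2^2"
      by (simp add: power2_norm_eq_inner inner_add_left inner_add_right inner_diff_left inner_diff_right inner_commute)
    have "norm (w1 - w2) > 0" using wne by simp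
    thus False using par n2 w1 w2 by (simp add: power2_eq_square)
  qed
  have ad': "d < a" using ad adne by simp
  define e1 where "e1 = c - F1"
  define L where "L = a^2 - d^2 + 2*(e1 \<bullet> g)"
  define quad where "quad = (\<lambda>w. 4*a^2*(norm (M *v w))^2 - 4*((M *v w) \<bullet> g)^2)"
  define lin where "lin = (\<lambda>w. 8*a^2*((M *v w) \<bullet> e1) - 4*L*((M *v w) \<bullet> g))"
  define K where "K = 4*a^2*(norm e1)^2 - L^2"
  have phi: "quad w + lin w + K = 0" if w: "norm w = 1" for w
  proof -
    let ?X = "c + M *v w"
    have "2*a*norm(?X - F1) = a^2 - d^2 + 2*((?X-F1) \<bullet> g)" using key E1[OF w] by simp
    moreover have "?X - F1 = M *v w + e1" by (simp add: e1_def)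
    ultimately have h: "2*a*norm(M *v w + e1) = L + 2*((M *v w) \<bullet> g)" by (simp add: L_def inner_add_left)
    have "(2*a*norm(M *v w + e1))^2 = 4*a^2*(norm (M *v w)^2 + 2*((M *v w) \<bullet> e1) + norm e1^2)"
      by (simp add: power_mult_distrib power2_norm_eq_inner inner_add_left inner_add_right inner_commute)
    hence "4*a^2*(norm (M *v w)^2 + 2*((M *v w) \<bullet> e1) + norm e1^2) = (L + 2*((M *v w) \<bullet> g))^2" using h by simp
    thus ?thesis unfolding quad_def lin_def K_def by (rule phi_alg)
  qed
  have minus: "M *v (- w) = - (M *v w)" for w
    by (metis matrix_vector_mult_scaleR scaleR_minus1_left)
  have linz: "lin w = 0" if w: "norm w = 1" for w
  proof -
    have "norm (-w) = 1" using w by simp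
    from phi[OF this] phi[OF w] show ?thesis
      unfolding quad_def lin_def minus by (simp add: algebra_simps)
  qed
  have liny: "8*a^2*(y \<bullet> e1) - 4*L*(y \<bullet> g) = 0" for y
  proof (cases "y = 0")
    case True then show ?thesis by simp
  next
    case False
    define w where "w = N *v y"
    have Mw: "M *v w = y" by (simp add: w_def Mr)
    have wn: "w \<noteq> 0" using False Mw by auto
    define u where "u = (1/norm w) *\<^sub>R w"
    have "norm u = 1" using wn by (simp add: u_def)
    hence "lin u = 0" by (rule linz)
    moreover have "M *v u = (1/norm w) *\<^sub>R y" by (simp add: u_def matrix_vector_mult_scaleR Mw)
    ultimately have "(1/norm w) * (8*a^2*(y \<bullet> e1) - 4*L*(y \<bullet> g)) = 0"
      unfolding lin_def by (simp add: algebra_simps)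
    thus ?thesis using wn by simp
  qed
  define y where "y = (8*a^2) *\<^sub>R e1 - (4*L) *\<^sub>R g"
  have zz: "z \<bullet> ((8*a^2) *\<^sub>R e1 - (4*L) *\<^sub>R g) = 8*a^2*(z \<bullet> e1) - 4*L*(z \<bullet> g)" for z
    by (simp only: inner_diff_right inner_scaleR_right)
  have "y \<bullet> y = 8*a^2*(y \<bullet> e1) - 4*L*(y \<bullet> g)"
    using zz[of y] unfolding y_def[symmetric] .
  hence "y = 0" using liny[of y] by simp
  hence eq8: "(8*a^2) *\<^sub>R e1 = (4*L) *\<^sub>R g" unfolding y_def by simp
  have "e1 = (1/(8*a^2)) *\<^sub>R ((8*a^2) *\<^sub>R e1)" using a0 by simp
  also have "\<dots> = (1/(8*a^2)) *\<^sub>R ((4*L) *\<^sub>R g)" using eq8 by simp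
  also have "\<dots> = (L/(2*a^2)) *\<^sub>R g" by simp
  finally have e1eq: "e1 = (L/(2*a^2)) *\<^sub>R g" .
  define k where "k = L/(2*a^2)"
  have e1k: "e1 = k *\<^sub>R g" using e1eq k_def by simp
  have Lk: "L = 2*a^2*k" using a0 by (simp add: k_def)
  have e1g: "e1 \<bullet> g = k * d^2" by (simp add: e1k d_def power2_norm_eq_inner)
  have "2*a^2*k = a^2 - d^2 + 2*k*d^2" using Lk L_def e1g by simp
  hence k0: "(2*k - 1)*(a^2 - d^2) = 0" by (simp add: algebra_simps)
  have d0: "d \<ge> 0" by (simp add: d_def)
  have lpos: "a^2 - d^2 > 0" using ad' d0 by (simp add: power_strict_mono)
  have kh: "k = 1/2" using k0 lpos by simp
  have L2: "L = a^2" using Lk kh by simp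
  have ne: "norm e1 = d/2" unfolding e1k kh d_def by simp
  have ne1: "norm e1 ^2 = d^2/4" unfolding ne by (simp add: power_divide)
  have Kv: "K = a^2*d^2 - a^2*a^2" unfolding K_def L2 ne1 by (simp add: power2_eq_square algebra_simps)
  have quadu: "quad u = a^2*(a^2 - d^2)" if "norm u = 1" for u
    using phi[OF that] linz[OF that] Kv by (simp add: algebra_simps power2_eq_square)
  define w where "w = w1 - w2"
  have Mw: "M *v w = P - Q" using P Q by (simp add: w_def matrix_vector_mult_diff_distrib)
  have wn: "w \<noteq> 0" using wne w_def by simp
  define u where "u = (1/norm w) *\<^sub>R w"
  have "norm u = 1" using wn by (simp add: u_def)
  hence "quad u = a^2*(a^2 - d^2)" by (rule quadu)
  moreover have "quad u = (1/norm w)^2 * quad w"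
    unfolding quad_def u_def by (simp add: matrix_vector_mult_scaleR power_mult_distrib power_divide algebra_simps)
  ultimately have qw: "quad w = a^2*(a^2 - d^2) * norm w ^2" using wn by (simp add: field_simps)
  hence hW: "4*a^2*norm (P-Q)^2 - 4*((P-Q) \<bullet> g)^2 = a^2*(a^2 - d^2) * norm w ^2"
    unfolding quad_def Mw by simp
  obtain z where s0: "0 \<le> z" and s1: "z \<le> 1" and Fs: "F1 = (1-z) *\<^sub>R P + z *\<^sub>R Q"
    using F1seg unfolding closed_segment_def by blast
  have PF: "P - F1 = z *\<^sub>R (P - Q)" unfolding Fs by (simp add: algebra_simps)
  have QF: "Q - F1 = (-(1-z)) *\<^sub>R (P - Q)" unfolding Fs by (simp add: algebra_simps)
  have hP: "2*a*z*norm (P-Q) = (a^2 - d^2) + 2*z*((P-Q) \<bullet> g)"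
    using key[OF PE] s0 unfolding PF by simp
  have hQ: "2*a*(1-z)*norm (P-Q) = (a^2 - d^2) - 2*(1-z)*((P-Q) \<bullet> g)"
  proof -
    have n: "norm (Q - F1) = (1-z)*norm (P-Q)" unfolding QF using s1 by simp
    have i: "(Q - F1) \<bullet> g = -((1-z)*((P-Q) \<bullet> g))" unfolding QF by (simp add: algebra_simps)
    show ?thesis using key[OF QE] unfolding n i by (simp add: algebra_simps)
  qed
  have "a * norm w ^2 = 4 * norm (P - Q)"
    by (rule fin_alg[OF a0 lpos s0 s1 hP hQ hW])
  thus ?thesis unfolding w_def .
qed



lemma major_euc:
  fixes E :: "(real^2) set" and F1 F2 :: "real^2"
  assumes E: "E = {X. norm (X-F1) + norm (X-F2) = a}" and ne: "E \<noteq> {}"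
  shows "(SUP P\<in>E. SUP Q\<in>E. norm (P - Q)) = a"
proof -
  obtain X0 where X0: "X0 \<in> E" using ne by blast
  define d where "d = norm (F2 - F1)"
  have ad: "d \<le> a"
  proof -
    have "F2 - F1 = (X0 - F1) - (X0 - F2)" by simp
    hence "d \<le> norm (X0 - F1) + norm (X0 - F2)" unfolding d_def by (metis norm_triangle_ineq4)
    thus ?thesis using X0 E by simp
  qed
  have d0: "0 \<le> d" by (simp add: d_def)
  have bnd: "norm (P - Q) \<le> a" if "P \<in> E" "Q \<in> E" for P Q
  proof -
    have 1: "norm (P - Q) \<le> norm (P - F1) + norm (Q - F1)"
      using norm_triangle_ineq4[of "P - F1" "Q - F1"] by simp
    have 2: "norm (P - Q) \<le> norm (P - F2) + norm (Q - F2)"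
      using norm_triangle_ineq4[of "P - F2" "Q - F2"] by simp
    show ?thesis using 1 2 that E by simp
  qed
  define u :: "real^2" where "u = (if F2 = F1 then axis 1 1 else (1/d) *\<^sub>R (F2 - F1))"
  have nu: "norm u = 1" by (simp add: u_def d_def)
  have Fu: "F2 - F1 = d *\<^sub>R u" by (simp add: u_def d_def)
  have F2e: "F2 = F1 + d *\<^sub>R u" using Fu by (simp add: algebra_simps)
  define P0 where "P0 = F1 + (d/2) *\<^sub>R u + (a/2) *\<^sub>R u"
  define Q0 where "Q0 = F1 + (d/2) *\<^sub>R u - (a/2) *\<^sub>R u"
  have h1: "P0 - F1 = ((a+d)/2) *\<^sub>R u" unfolding P0_def by (simp add: vec_eq_iff field_simps)
  have h2: "P0 - F2 = ((a-d)/2) *\<^sub>R u" unfolding P0_def F2e by (simp add: vec_eq_iff field_simps)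
  have "norm (P0 - F1) + norm (P0 - F2) = a" unfolding h1 h2 using nu ad d0 by (simp add: field_simps)
  hence P0E: "P0 \<in> E" using E by simp
  have h1: "Q0 - F1 = (-(a-d)/2) *\<^sub>R u" unfolding Q0_def by (simp add: vec_eq_iff field_simps)
  have h2: "Q0 - F2 = (-(a+d)/2) *\<^sub>R u" unfolding Q0_def F2e by (simp add: vec_eq_iff field_simps)
  have "norm (Q0 - F1) + norm (Q0 - F2) = a" unfolding h1 h2 using nu ad d0 by (simp add: field_simps)
  hence Q0E: "Q0 \<in> E" using E by simp
  have "P0 - Q0 = a *\<^sub>R u" unfolding P0_def Q0_def by (simp add: vec_eq_iff field_simps)
  hence PQ0: "norm (P0 - Q0) = a" using nu ad d0 by (simp add: field_simps)
  have bddi: "bdd_above ((\<lambda>Q. norm (P - Q)) ` E)" if "P \<in> E" for P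
    using bnd that by (intro bdd_aboveI[of _ a]) auto
  have inner: "(SUP Q\<in>E. norm (P - Q)) \<le> a" if "P \<in> E" for P
    using bnd that ne by (intro cSUP_least) auto
  have bddo: "bdd_above ((\<lambda>P. SUP Q\<in>E. norm (P - Q)) ` E)"
    using inner by (intro bdd_aboveI[of _ a]) auto
  have le: "(SUP P\<in>E. SUP Q\<in>E. norm (P - Q)) \<le> a"
    by (rule cSUP_least[OF ne]) (rule inner)
  have "a \<le> (SUP Q\<in>E. norm (P0 - Q))"
    using PQ0 by (intro cSUP_upper2[OF bddi[OF P0E] Q0E]) simp
  hence ge: "a \<le> (SUP P\<in>E. SUP Q\<in>E. norm (P - Q))"
    by (intro cSUP_upper2[OF bddo P0E])
  show ?thesis using le ge by simp
qed


lemma main_one: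
  fixes M A :: "real^2^2" and c F1 F2 P Q w1 w2 :: "real^2" and E :: "(real^2) set"
  assumes inv: "invertible M" and Edef: "E = {c + M *v u | u. norm u = 1}"
    and A: "euclidean_structure A" and fo: "foci A E F1 F2"
    and w1: "norm w1 = 1" and w2: "norm w2 = 1"
    and P: "P = c + M *v w1" and Q: "Q = c + M *v w2"
    and PQ: "P \<noteq> Q" and F1seg: "F1 \<in> closed_segment P Q"
  shows "major_axis_length A E * (norm (w1 - w2))^2 = 4 * qnorm A (P - Q)"
proof -
  obtain R :: "real^2^2" where Rinv: "invertible R" and qR0: "\<forall>x. qnorm A x = norm (R *v x)"
    using sqrt_form[OF A] by blast
  have qR: "qnorm A x = norm (R *v x)" for x using qR0 by blast
  obtain Ri :: "real^2^2" where RRi: "R ** Ri = mat 1" and RiR: "Ri ** R = mat 1"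
    using Rinv unfolding invertible_def by blast
  have Rl: "Ri *v (R *v x) = x" for x using RiR by (simp add: matrix_vector_mul_assoc)
  have Rr: "R *v (Ri *v y) = y" for y using RRi by (simp add: matrix_vector_mul_assoc)
  obtain a where Ea: "E = {X. qnorm A (X - F1) + qnorm A (X - F2) = a}"
    using fo unfolding foci_def by iprover
  define E' where "E' = (\<lambda>x. R *v x) ` E"
  have E'a: "E' = {Y. norm (Y - R *v F1) + norm (Y - R *v F2) = a}"
  proof (intro set_eqI iffI)
    fix Y assume "Y \<in> E'"
    then obtain X where X: "X \<in> E" "Y = R *v X" unfolding E'_def by blast
    thus "Y \<in> {Y. norm (Y - R *v F1) + norm (Y - R *v F2) = a}"
      using Ea by (simp add: qR matrix_vector_mult_diff_distrib)
  next
    fix Y assume Y: "Y \<in> {Y. norm (Y - R *v F1) + norm (Y - R *v F2) = a}"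
    define X where "X = Ri *v Y"
    have RX: "R *v X = Y" by (simp add: X_def Rr)
    have "X \<in> E" using Y Ea by (simp add: qR matrix_vector_mult_diff_distrib RX)
    thus "Y \<in> E'" unfolding E'_def using RX by blast
  qed
  have inE: "c + M *v w \<in> E" if "norm w = 1" for w
    unfolding Edef mem_Collect_eq using that by iprover
  have fromE: "\<exists>w. norm w = 1 \<and> X = c + M *v w" if "X \<in> E" for X
  proof -
    have "\<exists>u. X = c + M *v u \<and> norm u = 1" using that unfolding Edef mem_Collect_eq .
    thus ?thesis by iprover
  qed
  have lin: "R *v (c + M *v w) = R *v c + (R ** M) *v w" for w
    by (simp add: matrix_vector_right_distrib matrix_vector_mul_assoc)
  have c1: "invertible (R ** M)" using Rinv inv by (rule invertible_mult)
  have c2: "norm (R *v c + (R ** M) *v w - R *v F1) + norm (R *v c + (R ** M) *v w - R *v F2) = a"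
    if "norm w = 1" for w
  proof -
    have "R *v (c + M *v w) \<in> E'" unfolding E'_def using inE[OF that] by blast
    thus ?thesis unfolding E'a lin by simp
  qed
  have c3: "\<exists>w. norm w = 1 \<and> X = R *v c + (R ** M) *v w"
    if "norm (X - R *v F1) + norm (X - R *v F2) = a" for X
  proof -
    have "X \<in> E'" unfolding E'a using that by simp
    then obtain Y where Y: "Y \<in> E" "X = R *v Y" unfolding E'_def by blast
    obtain w where w: "norm w = 1" "Y = c + M *v w" using fromE[OF Y(1)] by blast
    have "X = R *v c + (R ** M) *v w" using Y(2) w(2) lin by simp
    thus ?thesis using w(1) by blast
  qed
  have c4: "R *v P = R *v c + (R ** M) *v w1" using P lin by simp
  have c5: "R *v Q = R *v c + (R ** M) *v w2" using Q lin by simp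
  have c6: "R *v P \<noteq> R *v Q"
  proof
    assume "R *v P = R *v Q"
    hence "Ri *v (R *v P) = Ri *v (R *v Q)" by simp
    thus False using PQ unfolding Rl by simp
  qed
  have c7: "R *v F1 \<in> closed_segment (R *v P) (R *v Q)"
    using F1seg closed_segment_linear_image[OF matrix_vector_mul_linear, of R P Q] by blast
  have core_app: "a * (norm (w1 - w2))^2 = 4 * norm (R *v P - R *v Q)"
    by (rule core[OF c1 c2 c3 w1 w2 c4 c5 c6 c7])
  have ne: "E' \<noteq> {}" using inE[OF w1] unfolding E'_def by blast
  have "major_axis_length A E = (SUP P\<in>E'. SUP Q\<in>E'. norm (P - Q))"
    unfolding major_axis_length_def E'_def by (simp add: image_image qR matrix_vector_mult_diff_distrib)
  also have "\<dots> = a" by (rule major_euc[OF E'a ne])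
  finally have "major_axis_length A E = a" .
  thus ?thesis using core_app by (simp add: qR matrix_vector_mult_diff_distrib)
qed

theorem proposition8:
  fixes E :: "(real^2) set" and A B :: "real^2^2" and F1 F2 G1 G2 P Q :: "real^2"
  assumes "is_ellipse E"
    and "euclidean_structure A" and "euclidean_structure B"
    and "foci A E F1 F2" and "foci B E G1 G2"
    and "P \<in> E" and "Q \<in> E" and "P \<noteq> Q"
    and "F1 \<in> closed_segment P Q" and "G1 \<in> closed_segment P Q"
  shows "major_axis_length A E = major_axis_length B E \<longleftrightarrow> qnorm A (P - Q) = qnorm B (P - Q)"
proof -
  obtain M :: "real^2^2" and c :: "real^2" where h: "invertible M \<and> E = {c + M *v u | u. norm u = 1}"
    using assms(1) unfolding is_ellipse_def by iprover
  hence inv: "invertible M" and Edef: "E = {c + M *v u | u. norm u = 1}" by auto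
  have "\<exists>u. P = c + M *v u \<and> norm u = 1" using assms(6) unfolding Edef mem_Collect_eq .
  then obtain w1 where w1: "norm w1 = 1" "P = c + M *v w1" by iprover
  have "\<exists>u. Q = c + M *v u \<and> norm u = 1" using assms(7) unfolding Edef mem_Collect_eq .
  then obtain w2 where w2: "norm w2 = 1" "Q = c + M *v w2" by iprover
  have hA: "major_axis_length A E * (norm (w1 - w2))^2 = 4 * qnorm A (P - Q)"
    by (rule main_one[OF inv Edef assms(2) assms(4) w1(1) w2(1) w1(2) w2(2) assms(8) assms(9)])
  have hB: "major_axis_length B E * (norm (w1 - w2))^2 = 4 * qnorm B (P - Q)"
    by (rule main_one[OF inv Edef assms(3) assms(5) w1(1) w2(1) w1(2) w2(2) assms(8) assms(10)])
  have "w1 \<noteq> w2" using assms(8) w1 w2 by auto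
  hence W: "(norm (w1 - w2))^2 > 0" by simp
  show ?thesis
  proof
    assume "major_axis_length A E = major_axis_length B E"
    thus "qnorm A (P - Q) = qnorm B (P - Q)" using hA hB by simp
  next
    assume "qnorm A (P - Q) = qnorm B (P - Q)"
    hence "major_axis_length A E * (norm (w1 - w2))^2 = major_axis_length B E * (norm (w1 - w2))^2"
      using hA hB by simp
    thus "major_axis_length A E = major_axis_length B E" using W by simp
  qed
qed

end
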